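(* There exist functions $\psi,\phi\in L^\infty_{loc}(\mathbb{R})$ such that $S_{2+\varepsilon}(\psi,\phi)=\infty$ for every $\varepsilon>0$, while the commutator $[\phi,[\psi,H]]$ is bounded on $L^2(\mathbb{R})$, where $H$ is the Hilbert transform.
   Context: The Hilbert transform is $Hf(x)=\lim_{\varepsilon\to0}\int_{|x-y|>\varepsilon}\frac{f(y)}{x-y}\,dy$. $[A,B]=AB-BA$, and a function acts by pointwise multiplication; the commutator is defined on $L^\infty_c(\mathbb{R})$ and bounded on $L^2$ means $\|[\phi,[\psi,H]]f\|_{2}\le K\|f\|_2$ for all $f\in L^\infty_c$. For $r>0$, with $\langle g\rangle_I=\frac1{|I|}\int_Ig$ and supremum over all intervals $I$: $S_r(b_1,b_2)=\sup_I\big(\frac1{|I|}\int_I|b_1-\langle b_1\rangle_I|^r\big)^{1/r}\big(\frac1{|I|}\int_I|b_2-\langle b_2\rangle_I|^r\big)^{1/r}$. *)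

theory Defs
  imports "HOL-Analysis.Analysis"
begin

definition Linf_loc :: "(real \<Rightarrow> real) \<Rightarrow> bool" where
  "Linf_loc b \<longleftrightarrow> b \<in> borel_measurable lborel \<and>
     (\<forall>R. \<exists>C. AE x in lborel. \<bar>x\<bar> \<le> R \<longrightarrow> \<bar>b x\<bar> \<le> C)"

definition Linf_c :: "(real \<Rightarrow> real) \<Rightarrow> bool" where
  "Linf_c f \<longleftrightarrow> f \<in> borel_measurable lborel \<and>
     (\<exists>C. AE x in lborel. \<bar>f x\<bar> \<le> C) \<and>
     (\<exists>R. AE x in lborel. R < \<bar>x\<bar> \<longrightarrow> f x = 0)"

definition hilbert :: "(real \<Rightarrow> real) \<Rightarrow> real \<Rightarrow> real" where
  "hilbert f x = Lim (at_right 0)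
     (\<lambda>\<epsilon>. set_lebesgue_integral lborel {y. \<epsilon> < \<bar>x - y\<bar>} (\<lambda>y. f y / (x - y)))"

definition commut :: "(real \<Rightarrow> real) \<Rightarrow> ((real \<Rightarrow> real) \<Rightarrow> real \<Rightarrow> real)
    \<Rightarrow> (real \<Rightarrow> real) \<Rightarrow> real \<Rightarrow> real" where
  "commut b T f = (\<lambda>x. b x * T f x - T (\<lambda>y. b y * f y) x)"

definition avg :: "(real \<Rightarrow> real) \<Rightarrow> real \<Rightarrow> real \<Rightarrow> real" where
  "avg g a c = set_lebesgue_integral lborel {a..c} g / (c - a)"

definition osc :: "real \<Rightarrow> (real \<Rightarrow> real) \<Rightarrow> real \<Rightarrow> real \<Rightarrow> real" where
  "osc r b a c = (set_lebesgue_integral lborel {a..c}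
       (\<lambda>x. \<bar>b x - avg b a c\<bar> powr r) / (c - a)) powr (1 / r)"

definition S_r :: "real \<Rightarrow> (real \<Rightarrow> real) \<Rightarrow> (real \<Rightarrow> real) \<Rightarrow> ereal" where
  "S_r r b1 b2 = (SUP I \<in> {(a, c). a < c}. ereal (osc r b1 (fst I) (snd I) * osc r b2 (fst I) (snd I)))"

end

theory Submission
  imports Defs
begin

definition hh :: "nat \<Rightarrow> real" where "hh n = exp (real n ^ 2 / 2 - real n)"
definition mm :: "nat \<Rightarrow> real" where "mm n = exp (- (real n ^ 2))"
definition phi0 :: "real \<Rightarrow> real" where
  "phi0 x = (if 1 \<le> x \<and> x - real_of_int \<lfloor>x\<rfloor> < mm (nat \<lfloor>x\<rfloor>) then hh (nat \<lfloor>x\<rfloor>) else 0)"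
definition psi0 :: "real \<Rightarrow> real" where "psi0 x = phi0 (- x)"

lemma mm_le1: "mm n \<le> 1" "0 < mm n" unfolding mm_def by auto
lemma hh_pos: "0 < hh n" unfolding hh_def by auto

lemma phi0_supp: "phi0 x \<noteq> 0 \<Longrightarrow> 1 \<le> x"
  unfolding phi0_def by (auto split: if_splits)
lemma psi0_supp: "psi0 x \<noteq> 0 \<Longrightarrow> x \<le> -1"
  unfolding psi0_def using phi0_supp by force
lemma phi0_psi0: "psi0 x * phi0 x = 0"
proof (rule ccontr)
  assume "psi0 x * phi0 x \<noteq> 0"
  hence "psi0 x \<noteq> 0" "phi0 x \<noteq> 0" by auto
  from psi0_supp[OF this(1)] phi0_supp[OF this(2)] show False by linarith
qed

lemma phi0_spike:
  assumes "1 \<le> n" "real n < x" "x < real n + mm n"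
  shows "phi0 x = hh n"
proof -
  have "x < real n + 1" using assms mm_le1[of n] by linarith
  hence fl: "\<lfloor>x\<rfloor> = int n" using assms by (simp add: floor_eq_iff)
  show ?thesis unfolding phi0_def fl using assms by auto
qed

lemma phi0_bound: "\<bar>phi0 x\<bar> \<le> exp (x^2/2)"
proof (cases "phi0 x = 0")
  case False
  hence x1: "1 \<le> x" by (rule phi0_supp)
  define n where "n = nat \<lfloor>x\<rfloor>"
  have nx: "real n \<le> x" "0 \<le> real n" using x1 unfolding n_def by auto
  have "phi0 x = hh n" using False unfolding phi0_def n_def by (auto split: if_splits)
  moreover have "hh n \<le> exp (real n ^ 2 / 2)" unfolding hh_def by simp
  moreover have "real n ^ 2 \<le> x ^ 2" using nx by (intro power_mono) auto
  moreover have "exp (real n ^ 2 / 2) \<le> exp (x^2/2)" using \<open>real n ^ 2 \<le> x ^ 2\<close> by simp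
  ultimately have "hh n \<le> exp (x^2/2)" by linarith
  thus ?thesis using hh_pos[of n] \<open>phi0 x = hh n\<close> by simp
qed auto

lemma psi0_bound: "\<bar>psi0 x\<bar> \<le> exp (x^2/2)"
  unfolding psi0_def using phi0_bound[of "-x"] by simp

lemma phi0_meas[measurable]: "phi0 \<in> borel_measurable lborel"
proof -
  have "(\<lambda>x. (\<lambda>i::int. \<lambda>x. if 1 \<le> x \<and> x - real_of_int i < mm (nat i) then hh (nat i) else 0) \<lfloor>x\<rfloor> x) \<in> borel_measurable lborel"
    by (rule measurable_compose_countable) auto
  thus ?thesis unfolding phi0_def[abs_def] by simp
qed

lemma psi0_meas[measurable]: "psi0 \<in> borel_measurable lborel"
  unfolding psi0_def[abs_def] by measurable

lemma Linf_phi0: "Linf_loc phi0"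
  unfolding Linf_loc_def
proof (intro conjI allI)
  fix R :: real
  show "\<exists>C. AE x in lborel. \<bar>x\<bar> \<le> R \<longrightarrow> \<bar>phi0 x\<bar> \<le> C"
  proof (intro exI AE_I2 impI)
    fix x :: real assume "\<bar>x\<bar> \<le> R"
    hence "\<bar>x\<bar>^2 \<le> R^2" by (intro power_mono) auto
    hence "x^2 \<le> R^2" by simp
    hence "exp (x^2/2) \<le> exp (R^2/2)" by simp
    thus "\<bar>phi0 x\<bar> \<le> exp (R^2/2)" using phi0_bound[of x] by linarith
  qed
qed simp

lemma Linf_psi0: "Linf_loc psi0"
  unfolding Linf_loc_def
proof (intro conjI allI)
  fix R :: real
  show "\<exists>C. AE x in lborel. \<bar>x\<bar> \<le> R \<longrightarrow> \<bar>psi0 x\<bar> \<le> C"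
  proof (intro exI AE_I2 impI)
    fix x :: real assume "\<bar>x\<bar> \<le> R"
    hence "\<bar>x\<bar>^2 \<le> R^2" by (intro power_mono) auto
    hence "x^2 \<le> R^2" by simp
    hence "exp (x^2/2) \<le> exp (R^2/2)" by simp
    thus "\<bar>psi0 x\<bar> \<le> exp (R^2/2)" using psi0_bound[of x] by linarith
  qed
qed simp

lemma hilbert_right:
  assumes g: "\<And>y. g y \<noteq> 0 \<Longrightarrow> y \<le> -1" and x: "1 \<le> x"
  shows "hilbert g x = (\<integral>y. g y / (x - y) \<partial>lborel)"
  unfolding hilbert_def
proof (rule tendsto_Lim)
  show "\<not> trivial_limit (at_right (0::real))" by simp
  have "eventually (\<lambda>\<epsilon>. set_lebesgue_integral lborel {y. \<epsilon> < \<bar>x - y\<bar>} (\<lambda>y. g y / (x - y))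
           = (\<integral>y. g y / (x - y) \<partial>lborel)) (at_right (0::real))"
    unfolding eventually_at_right_field
  proof (intro exI[of _ 2] conjI allI impI)
    fix e :: real assume "0 < e" "e < 2"
    have "(\<lambda>y. indicator {y. e < \<bar>x - y\<bar>} y *\<^sub>R (g y / (x - y))) = (\<lambda>y. g y / (x - y))"
    proof
      fix y show "indicator {y. e < \<bar>x - y\<bar>} y *\<^sub>R (g y / (x - y)) = g y / (x - y)"
        using g[of y] x \<open>e < 2\<close> by (cases "g y = 0") (auto simp: indicator_def)
    qed
    thus "set_lebesgue_integral lborel {y. e < \<bar>x - y\<bar>} (\<lambda>y. g y / (x - y)) = (\<integral>y. g y / (x - y) \<partial>lborel)"
      unfolding set_lebesgue_integral_def by simp
  qed simp
  thus "((\<lambda>\<epsilon>. set_lebesgue_integral lborel {y. \<epsilon> < \<bar>x - y\<bar>} (\<lambda>y. g y / (x - y))) \<longlongrightarrow> (\<integral>y. g y / (x - y) \<partial>lborel)) (at_right 0)"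
    by (rule tendsto_eventually)
qed

lemma hilbert_left:
  assumes g: "\<And>y. g y \<noteq> 0 \<Longrightarrow> 1 \<le> y" and x: "x \<le> -1"
  shows "hilbert g x = (\<integral>y. g y / (x - y) \<partial>lborel)"
  unfolding hilbert_def
proof (rule tendsto_Lim)
  show "\<not> trivial_limit (at_right (0::real))" by simp
  have "eventually (\<lambda>\<epsilon>. set_lebesgue_integral lborel {y. \<epsilon> < \<bar>x - y\<bar>} (\<lambda>y. g y / (x - y))
           = (\<integral>y. g y / (x - y) \<partial>lborel)) (at_right (0::real))"
    unfolding eventually_at_right_field
  proof (intro exI[of _ 2] conjI allI impI)
    fix e :: real assume "0 < e" "e < 2"
    have "(\<lambda>y. indicator {y. e < \<bar>x - y\<bar>} y *\<^sub>R (g y / (x - y))) = (\<lambda>y. g y / (x - y))"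
    proof
      fix y show "indicator {y. e < \<bar>x - y\<bar>} y *\<^sub>R (g y / (x - y)) = g y / (x - y)"
        using g[of y] x \<open>e < 2\<close> by (cases "g y = 0") (auto simp: indicator_def)
    qed
    thus "set_lebesgue_integral lborel {y. e < \<bar>x - y\<bar>} (\<lambda>y. g y / (x - y)) = (\<integral>y. g y / (x - y) \<partial>lborel)"
      unfolding set_lebesgue_integral_def by simp
  qed simp
  thus "((\<lambda>\<epsilon>. set_lebesgue_integral lborel {y. \<epsilon> < \<bar>x - y\<bar>} (\<lambda>y. g y / (x - y))) \<longlongrightarrow> (\<integral>y. g y / (x - y) \<partial>lborel)) (at_right 0)"
    by (rule tendsto_eventually)
qed

lemma hilbert_zero: "hilbert (\<lambda>y. 0) x = 0"
  unfolding hilbert_def set_lebesgue_integral_def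
  by (rule tendsto_Lim) auto

lemma norm_integral_le_nn: "ennreal \<bar>integral\<^sup>L M (f::_\<Rightarrow>real)\<bar> \<le> (\<integral>\<^sup>+x. ennreal \<bar>f x\<bar> \<partial>M)"
proof (cases "integrable M f")
  case True thus ?thesis using integral_norm_bound_ennreal[OF True] by simp
next
  case False thus ?thesis by (simp add: not_integrable_integral_eq)
qed

lemma key_est:
  fixes f :: "real \<Rightarrow> real" and u :: "real \<Rightarrow> real"
  assumes fm[measurable]: "f \<in> borel_measurable lborel"
    and um[measurable]: "u \<in> borel_measurable lborel"
    and sep: "\<And>y. u y \<noteq> 0 \<Longrightarrow> \<bar>x - y\<bar> \<ge> 2"
  shows "ennreal ((\<integral>y. u y * f y / (x - y) \<partial>lborel)\<^sup>2)
     \<le> ennreal (1/4) * (\<integral>\<^sup>+y. ennreal ((u y)\<^sup>2) \<partial>lborel) * (\<integral>\<^sup>+y. ennreal ((f y)\<^sup>2) \<partial>lborel)"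
proof -
  define I where "I = (\<integral>y. u y * f y / (x - y) \<partial>lborel)"
  have "ennreal (I\<^sup>2) = (ennreal \<bar>I\<bar>)\<^sup>2" by (simp add: ennreal_power)
  also have "\<dots> \<le> (\<integral>\<^sup>+y. ennreal \<bar>u y / (x - y)\<bar> * ennreal \<bar>f y\<bar> \<partial>lborel)\<^sup>2"
  proof (rule power_mono_ennreal)
    have "ennreal \<bar>I\<bar> \<le> (\<integral>\<^sup>+y. ennreal \<bar>u y * f y / (x - y)\<bar> \<partial>lborel)"
      unfolding I_def by (rule norm_integral_le_nn)
    also have "\<dots> = (\<integral>\<^sup>+y. ennreal \<bar>u y / (x - y)\<bar> * ennreal \<bar>f y\<bar> \<partial>lborel)"
      by (intro nn_integral_cong) (simp add: ennreal_mult''[symmetric] abs_mult del: ennreal_mult'')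
    finally show "ennreal \<bar>I\<bar> \<le> \<dots>" .
  qed
  also have "\<dots> \<le> (\<integral>\<^sup>+y. (ennreal \<bar>u y / (x - y)\<bar>)^2 \<partial>lborel) * (\<integral>\<^sup>+y. (ennreal \<bar>f y\<bar>)^2 \<partial>lborel)"
    by (rule Cauchy_Schwarz_nn_integral) auto
  also have "\<dots> \<le> (ennreal (1/4) * (\<integral>\<^sup>+y. ennreal ((u y)\<^sup>2) \<partial>lborel)) * (\<integral>\<^sup>+y. ennreal ((f y)\<^sup>2) \<partial>lborel)"
  proof (rule mult_mono)
    have "(\<integral>\<^sup>+y. (ennreal \<bar>u y / (x - y)\<bar>)^2 \<partial>lborel) \<le> (\<integral>\<^sup>+y. ennreal (1/4) * ennreal ((u y)\<^sup>2) \<partial>lborel)"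
    proof (rule nn_integral_mono)
      fix y
      show "(ennreal \<bar>u y / (x - y)\<bar>)^2 \<le> ennreal (1/4) * ennreal ((u y)\<^sup>2)"
      proof (cases "u y = 0")
        case False
        hence d: "\<bar>x - y\<bar> \<ge> 2" by (rule sep)
        hence "(2::real)^2 \<le> \<bar>x - y\<bar>^2" by (intro power_mono) auto
        hence "(x - y)^2 \<ge> 4" by simp
        hence "(u y)^2 / (x - y)^2 \<le> (u y)^2 / 4" by (intro divide_left_mono) auto
        hence "(u y / (x - y))^2 \<le> 1/4 * (u y)^2"
          by (simp add: power_divide)
        hence "\<bar>u y / (x - y)\<bar>^2 \<le> 1/4 * (u y)^2" by (simp only: power2_abs)
        hence le: "ennreal (\<bar>u y / (x - y)\<bar>^2) \<le> ennreal (1/4 * (u y)^2)" by (rule ennreal_leI)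
        have A: "(ennreal \<bar>u y / (x - y)\<bar>)^2 = ennreal (\<bar>u y / (x - y)\<bar>^2)" by (rule ennreal_power) simp
        have e: "ennreal (1/4) * ennreal ((u y)^2) = ennreal (1/4 * (u y)^2)" by (rule ennreal_mult[symmetric]) auto
        show ?thesis unfolding A e by (rule le)
      qed simp
    qed
    also have "\<dots> = ennreal (1/4) * (\<integral>\<^sup>+y. ennreal ((u y)\<^sup>2) \<partial>lborel)"
      by (rule nn_integral_cmult) auto
    finally show "(\<integral>\<^sup>+y. (ennreal \<bar>u y / (x - y)\<bar>)^2 \<partial>lborel) \<le> \<dots>" .
    show "(\<integral>\<^sup>+y. (ennreal \<bar>f y\<bar>)^2 \<partial>lborel) \<le> (\<integral>\<^sup>+y. ennreal ((f y)\<^sup>2) \<partial>lborel)"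
      by (intro nn_integral_mono) (simp add: ennreal_power)
  qed auto
  finally show ?thesis unfolding I_def .
qed

definition cc :: "nat \<Rightarrow> real" where "cc n = (if n = 0 then 0 else (hh n)\<^sup>2)"

lemma phi0_sq_sum:
  "ennreal ((phi0 x)\<^sup>2) = (\<Sum>n. ennreal (cc n) * indicator {real n..<real n + mm n} x)"
proof -
  define n0 where "n0 = nat \<lfloor>x\<rfloor>"
  define t where "t = (\<lambda>n. ennreal (cc n) * indicator {real n..<real n + mm n} x)"
  have tn: "\<And>n. t n = (if n = n0 then t n else 0)"
  proof -
    fix n
    show "t n = (if n = n0 then t n else 0)"
    proof (cases "x \<in> {real n..<real n + mm n}")
      case True
      hence "real n \<le> x" "x < real n + 1" using mm_le1[of n] by auto
      hence "\<lfloor>x\<rfloor> = int n" by (simp add: floor_eq_iff)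
      thus ?thesis unfolding n0_def by simp
    next
      case False hence "t n = 0" by (simp add: t_def)
      thus ?thesis by (simp only: if_cancel)
    qed
  qed
  have E: "(\<lambda>n. if n = n0 then t n else 0) = t" by (rule ext) (rule tn[symmetric])
  from sums_single[of n0 t] have "t sums t n0" unfolding E .
  hence "(\<Sum>n. t n) = t n0" by (rule sums_unique[symmetric])
  also have "t n0 = ennreal ((phi0 x)\<^sup>2)"
  proof (cases "1 \<le> x")
    case True
    hence n01: "1 \<le> n0" "real n0 \<le> x" "x < real n0 + 1" unfolding n0_def by linarith+
    have fr: "x - real_of_int \<lfloor>x\<rfloor> = x - real n0" unfolding n0_def using True by simp
    show ?thesis
      unfolding t_def phi0_def cc_def fr using n01 True unfolding n0_def[symmetric]
      by (auto simp: indicator_def ennreal_power)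
  next
    case False
    hence "n0 = 0" unfolding n0_def by linarith
    thus ?thesis unfolding t_def cc_def phi0_def using False by simp
  qed
  finally show ?thesis unfolding t_def by simp
qed

lemma cc_mm: "cc n * mm n = (if n = 0 then 0 else exp (-2) ^ n)"
  unfolding cc_def hh_def mm_def
  by (simp add: power2_eq_square exp_add[symmetric] exp_of_nat_mult[symmetric] algebra_simps)

lemma phi0_L2: "(\<integral>\<^sup>+x. ennreal ((phi0 x)\<^sup>2) \<partial>lborel) < \<infinity>"
proof -
  have "(\<integral>\<^sup>+x. ennreal ((phi0 x)\<^sup>2) \<partial>lborel)
      = (\<integral>\<^sup>+x. (\<Sum>n. ennreal (cc n) * indicator {real n..<real n + mm n} x) \<partial>lborel)"
    by (simp add: phi0_sq_sum)
  also have "\<dots> = (\<Sum>n. \<integral>\<^sup>+x. ennreal (cc n) * indicator {real n..<real n + mm n} x \<partial>lborel)"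
    by (rule nn_integral_suminf) auto
  also have "\<dots> = (\<Sum>n. ennreal (cc n * mm n))"
  proof (intro suminf_cong)
    fix n
    have "real n \<le> real n + mm n" using mm_le1(2)[of n] by simp
    thus "(\<integral>\<^sup>+x. ennreal (cc n) * indicator {real n..<real n + mm n} x \<partial>lborel) = ennreal (cc n * mm n)"
      using mm_le1(2)[of n] by (simp add: nn_integral_cmult_indicator ennreal_mult cc_def)
  qed
  also have "\<dots> = ennreal (\<Sum>n. cc n * mm n)"
  proof (rule suminf_ennreal2)
    show "\<And>n. 0 \<le> cc n * mm n" using mm_le1 by (simp add: cc_def less_imp_le)
    show "summable (\<lambda>n. cc n * mm n)"
      by (rule summable_comparison_test'[of "\<lambda>n. exp (-2) ^ n" 0])
         (auto simp: cc_mm summable_geometric)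
  qed
  finally show ?thesis by simp
qed

lemma psi0_L2: "(\<integral>\<^sup>+x. ennreal ((psi0 x)\<^sup>2) \<partial>lborel) < \<infinity>"
proof -
  have "(\<integral>\<^sup>+x. ennreal ((psi0 x)\<^sup>2) \<partial>lborel) = (\<integral>\<^sup>+x. ennreal ((phi0 x)\<^sup>2) \<partial>lborel)"
  proof -
    have m: "(\<lambda>x. ennreal ((phi0 x)\<^sup>2)) \<in> borel_measurable borel"
    proof -
      have "(\<lambda>x. ennreal ((phi0 x)\<^sup>2)) \<in> borel_measurable lborel" by measurable
      thus ?thesis by simp
    qed
    show ?thesis
      unfolding psi0_def using nn_integral_real_affine[OF m, of "-1" 0] by simp
  qed
  thus ?thesis using phi0_L2 by simp
qed

lemma comm_eq:
  "commut phi0 (commut psi0 hilbert) f x =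
    (if 1 \<le> x then - phi0 x * (\<integral>y. psi0 y * f y / (x - y) \<partial>lborel)
     else if x \<le> -1 then - psi0 x * (\<integral>y. phi0 y * f y / (x - y) \<partial>lborel) else 0)"
proof -
  have z: "(\<lambda>y. psi0 y * (phi0 y * f y)) = (\<lambda>y. 0)"
  proof
    fix y show "psi0 y * (phi0 y * f y) = 0"
      using phi0_psi0[of y] by (simp add: mult.assoc[symmetric])
  qed
  have H0: "hilbert (\<lambda>y. psi0 y * (phi0 y * f y)) x = 0" unfolding z by (rule hilbert_zero)
  show ?thesis
  proof (cases "1 \<le> x")
    case True
    hence p: "psi0 x = 0" using psi0_supp[of x] by force
    have "hilbert (\<lambda>y. psi0 y * f y) x = (\<integral>y. psi0 y * f y / (x - y) \<partial>lborel)"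
      by (rule hilbert_right[OF _ True]) (use psi0_supp in force)
    thus ?thesis unfolding commut_def using True p H0 by simp
  next
    case False
    show ?thesis
    proof (cases "x \<le> -1")
      case True
      hence p: "phi0 x = 0" using phi0_supp[of x] by force
      have "hilbert (\<lambda>y. phi0 y * f y) x = (\<integral>y. phi0 y * f y / (x - y) \<partial>lborel)"
        by (rule hilbert_left[OF _ True]) (use phi0_supp in force)
      thus ?thesis unfolding commut_def using True False p H0 by simp
    next
      case False2: False
      hence "phi0 x = 0" "psi0 x = 0" using phi0_supp[of x] psi0_supp[of x] False by force+
      thus ?thesis unfolding commut_def using False False2 H0 by simp
    qed
  qed
qed

lemma comm_pointwise:
  assumes fm[measurable]: "f \<in> borel_measurable lborel"
  defines "P \<equiv> (\<integral>\<^sup>+y. ennreal ((phi0 y)\<^sup>2) \<partial>lborel)"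
    and "Q \<equiv> (\<integral>\<^sup>+y. ennreal ((psi0 y)\<^sup>2) \<partial>lborel)"
    and "N \<equiv> (\<integral>\<^sup>+y. ennreal ((f y)\<^sup>2) \<partial>lborel)"
  shows "ennreal ((commut phi0 (commut psi0 hilbert) f x)\<^sup>2)
     \<le> ennreal ((phi0 x)\<^sup>2) * (ennreal (1/4) * Q * N) + ennreal ((psi0 x)\<^sup>2) * (ennreal (1/4) * P * N)"
proof (cases "1 \<le> x")
  case True
  define I where "I = (\<integral>y. psi0 y * f y / (x - y) \<partial>lborel)"
  have "ennreal ((commut phi0 (commut psi0 hilbert) f x)\<^sup>2) = ennreal ((phi0 x)\<^sup>2 * I\<^sup>2)"
    unfolding comm_eq I_def using True by (simp add: power_mult_distrib)
  also have "\<dots> = ennreal ((phi0 x)\<^sup>2) * ennreal (I\<^sup>2)" by (rule ennreal_mult) auto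
  also have "\<dots> \<le> ennreal ((phi0 x)\<^sup>2) * (ennreal (1/4) * Q * N)"
  proof (rule mult_left_mono)
    show "ennreal (I\<^sup>2) \<le> ennreal (1/4) * Q * N"
      unfolding I_def Q_def N_def
    proof (rule key_est)
      fix y assume "psi0 y \<noteq> 0"
      hence "y \<le> -1" by (rule psi0_supp)
      thus "2 \<le> \<bar>x - y\<bar>" using True by simp
    qed auto
  qed simp
  also have "\<dots> \<le> ennreal ((phi0 x)\<^sup>2) * (ennreal (1/4) * Q * N) + ennreal ((psi0 x)\<^sup>2) * (ennreal (1/4) * P * N)"
    by (rule add_increasing2) auto
  finally show ?thesis .
next
  case False
  show ?thesis
  proof (cases "x \<le> -1")
    case True
    define I where "I = (\<integral>y. phi0 y * f y / (x - y) \<partial>lborel)"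
    have "ennreal ((commut phi0 (commut psi0 hilbert) f x)\<^sup>2) = ennreal ((psi0 x)\<^sup>2 * I\<^sup>2)"
      unfolding comm_eq I_def using True False by (simp add: power_mult_distrib)
    also have "\<dots> = ennreal ((psi0 x)\<^sup>2) * ennreal (I\<^sup>2)" by (rule ennreal_mult) auto
    also have "\<dots> \<le> ennreal ((psi0 x)\<^sup>2) * (ennreal (1/4) * P * N)"
    proof (rule mult_left_mono)
      show "ennreal (I\<^sup>2) \<le> ennreal (1/4) * P * N"
        unfolding I_def P_def N_def
      proof (rule key_est)
        fix y assume "phi0 y \<noteq> 0"
        hence "1 \<le> y" by (rule phi0_supp)
        thus "2 \<le> \<bar>x - y\<bar>" using True by simp
      qed auto
    qed simp
    also have "\<dots> \<le> ennreal ((phi0 x)\<^sup>2) * (ennreal (1/4) * Q * N) + ennreal ((psi0 x)\<^sup>2) * (ennreal (1/4) * P * N)"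
      by (rule add_increasing) auto
    finally show ?thesis .
  next
    case False2: False
    have "commut phi0 (commut psi0 hilbert) f x = 0" unfolding comm_eq using False False2 by simp
    thus ?thesis by simp
  qed
qed

lemma comm_bound:
  "\<exists>K. \<forall>f. Linf_c f \<longrightarrow>
       (\<integral>\<^sup>+ x. ennreal ((commut phi0 (commut psi0 hilbert) f x)\<^sup>2) \<partial>lborel)
         \<le> ennreal (K\<^sup>2) * (\<integral>\<^sup>+ x. ennreal ((f x)\<^sup>2) \<partial>lborel)"
proof -
  define P where "P = (\<integral>\<^sup>+y. ennreal ((phi0 y)\<^sup>2) \<partial>lborel)"
  define Q where "Q = (\<integral>\<^sup>+y. ennreal ((psi0 y)\<^sup>2) \<partial>lborel)"
  define Pr where "Pr = enn2real P"
  define Qr where "Qr = enn2real Q"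
  have PP: "P = ennreal Pr" unfolding Pr_def P_def using phi0_L2 by (simp add: ennreal_enn2real_if)
  have QQ: "Q = ennreal Qr" unfolding Qr_def Q_def using psi0_L2 by (simp add: ennreal_enn2real_if)
  have Pr0: "0 \<le> Pr" "0 \<le> Qr" unfolding Pr_def Qr_def by auto
  show ?thesis
  proof (intro exI allI impI)
    fix f assume "Linf_c f"
    hence fm[measurable]: "f \<in> borel_measurable lborel" unfolding Linf_c_def by simp
    define N where "N = (\<integral>\<^sup>+y. ennreal ((f y)\<^sup>2) \<partial>lborel)"
    have "(\<integral>\<^sup>+ x. ennreal ((commut phi0 (commut psi0 hilbert) f x)\<^sup>2) \<partial>lborel)
       \<le> (\<integral>\<^sup>+ x. ennreal ((phi0 x)\<^sup>2) * (ennreal (1/4) * Q * N) + ennreal ((psi0 x)\<^sup>2) * (ennreal (1/4) * P * N) \<partial>lborel)"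
      by (rule nn_integral_mono) (unfold P_def Q_def N_def, rule comm_pointwise[OF fm])
    also have "\<dots> = P * (ennreal (1/4) * Q * N) + Q * (ennreal (1/4) * P * N)"
      unfolding P_def Q_def
      by (subst nn_integral_add) (auto simp: nn_integral_multc)
    also have "\<dots> = ennreal (Pr * Qr / 4) * N + ennreal (Pr * Qr / 4) * N"
    proof -
      have e1: "ennreal (Pr * (1/4) * Qr) = ennreal Pr * ennreal (1/4) * ennreal Qr"
      proof -
        have "ennreal (Pr * (1/4) * Qr) = ennreal (Pr * (1/4)) * ennreal Qr" by (rule ennreal_mult) (use Pr0 in auto)
        also have "ennreal (Pr * (1/4)) = ennreal Pr * ennreal (1/4)" by (rule ennreal_mult) (use Pr0 in auto)
        finally show ?thesis .
      qed
      have e2: "ennreal (Qr * (1/4) * Pr) = ennreal Qr * ennreal (1/4) * ennreal Pr"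
      proof -
        have "ennreal (Qr * (1/4) * Pr) = ennreal (Qr * (1/4)) * ennreal Pr" by (rule ennreal_mult) (use Pr0 in auto)
        also have "ennreal (Qr * (1/4)) = ennreal Qr * ennreal (1/4)" by (rule ennreal_mult) (use Pr0 in auto)
        finally show ?thesis .
      qed
      have a1: "Pr * Qr / 4 = Pr * (1/4) * Qr" "Pr * Qr / 4 = Qr * (1/4) * Pr" by simp_all
      show ?thesis unfolding PP QQ
        apply (subst a1(1)) apply (subst a1(2)) unfolding e1 e2 by (simp only: ac_simps)
    qed
    also have "\<dots> = ennreal ((sqrt (Pr * Qr / 2))\<^sup>2) * N"
      using Pr0 by (simp add: distrib_right[symmetric] ennreal_plus[symmetric] del: ennreal_plus)
    finally show "(\<integral>\<^sup>+ x. ennreal ((commut phi0 (commut psi0 hilbert) f x)\<^sup>2) \<partial>lborel)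
         \<le> ennreal ((sqrt (Pr * Qr / 2))\<^sup>2) * (\<integral>\<^sup>+ x. ennreal ((f x)\<^sup>2) \<partial>lborel)"
      unfolding N_def .
  qed
qed

lemma osc_lower:
  fixes b :: "real \<Rightarrow> real"
  assumes bm[measurable]: "b \<in> borel_measurable lborel"
    and bB: "\<And>x. x \<in> {a..c} \<Longrightarrow> \<bar>b x\<bar> \<le> B"
    and ac: "a < c" and r: "0 < r" and h: "0 < h"
    and S: "S \<subseteq> {a..c}" "S \<in> sets lborel" "measure lborel S = m" "emeasure lborel S < \<infinity>"
    and Z: "Z \<subseteq> {a..c}" "Z \<in> sets lborel" "measure lborel Z = m" "emeasure lborel Z < \<infinity>"
    and SZ: "S \<inter> Z = {}"
    and bS: "\<And>x. x \<in> S \<Longrightarrow> b x = h" and bZ: "\<And>x. x \<in> Z \<Longrightarrow> b x = 0"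
  shows "(h/2) * (m/(c-a)) powr (1/r) \<le> osc r b a c"
proof -
  define \<mu> where "\<mu> = avg b a c"
  define g where "g = (\<lambda>x. \<bar>b x - \<mu>\<bar> powr r)"
  define \<alpha> where "\<alpha> = \<bar>h - \<mu>\<bar> powr r"
  define \<beta> where "\<beta> = \<bar>\<mu>\<bar> powr r"
  define k where "k = (\<lambda>x. \<alpha> * indicator S x + \<beta> * indicator Z x :: real)"
  have m0: "0 \<le> m" using S(3) by (metis measure_nonneg)
  have gm[measurable]: "g \<in> borel_measurable lborel" unfolding g_def by measurable
  have gi: "set_integrable lborel {a..c} g"
    unfolding set_integrable_def
  proof (rule integrableI_bounded_set[where A="{a..c}" and B="(B + \<bar>\<mu>\<bar>) powr r"])
    show "AE x in lborel. x \<in> {a..c} \<longrightarrow> norm (indicator {a..c} x *\<^sub>R g x) \<le> (B + \<bar>\<mu>\<bar>) powr r"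
    proof (intro AE_I2 impI)
      fix x assume x: "x \<in> {a..c}"
      have "\<bar>b x - \<mu>\<bar> \<le> B + \<bar>\<mu>\<bar>" using bB[OF x] by linarith
      hence "g x \<le> (B + \<bar>\<mu>\<bar>) powr r" unfolding g_def by (intro powr_mono2) (use r in auto)
      thus "norm (indicator {a..c} x *\<^sub>R g x) \<le> (B + \<bar>\<mu>\<bar>) powr r" using x by (simp add: g_def)
    qed
  qed (use ac in auto)
  have ki: "set_integrable lborel {a..c} k"
  proof -
    have "integrable lborel k" unfolding k_def
    proof (intro Bochner_Integration.integrable_add Bochner_Integration.integrable_mult_right)
      show "integrable lborel (indicator S :: real \<Rightarrow> real)" using S by (simp add: integrable_indicator_iff)
      show "integrable lborel (indicator Z :: real \<Rightarrow> real)" using Z by (simp add: integrable_indicator_iff)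
    qed
    thus ?thesis unfolding set_integrable_def by (rule integrable_mult_indicator[rotated]) simp
  qed
  have kle: "\<And>x. x \<in> {a..c} \<Longrightarrow> k x \<le> g x"
  proof -
    fix x assume "x \<in> {a..c}"
    show "k x \<le> g x"
    proof (cases "x \<in> S")
      case True
      hence "x \<notin> Z" using SZ by auto
      thus ?thesis using True bS[OF True] unfolding k_def g_def \<alpha>_def by simp
    next
      case False
      show ?thesis
      proof (cases "x \<in> Z")
        case True thus ?thesis using False bZ[OF True] unfolding k_def g_def \<beta>_def by simp
      qed (use False in \<open>simp add: k_def g_def\<close>)
    qed
  qed
  have "set_lebesgue_integral lborel {a..c} k \<le> set_lebesgue_integral lborel {a..c} g"
    by (rule set_integral_mono[OF ki gi kle])
  moreover have "set_lebesgue_integral lborel {a..c} k = \<alpha> * m + \<beta> * m"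
  proof -
    have "(\<lambda>x. indicator {a..c} x *\<^sub>R k x) = k"
    proof
      fix x show "indicator {a..c} x *\<^sub>R k x = k x"
        using S(1) Z(1) by (cases "x \<in> {a..c}") (auto simp: k_def indicator_def)
    qed
    hence "set_lebesgue_integral lborel {a..c} k = integral\<^sup>L lborel k"
      unfolding set_lebesgue_integral_def by simp
    also have "\<dots> = \<alpha> * m + \<beta> * m"
      unfolding k_def using S Z
      by (subst Bochner_Integration.integral_add) (auto simp: integrable_indicator_iff)
    finally show ?thesis .
  qed
  moreover have "(h/2) powr r \<le> \<alpha> + \<beta>"
  proof (cases "h/2 \<le> \<bar>\<mu>\<bar>")
    case True
    hence "(h/2) powr r \<le> \<beta>" unfolding \<beta>_def by (intro powr_mono2) (use r h in auto)
    moreover have "0 \<le> \<alpha>" unfolding \<alpha>_def by simp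
    ultimately show ?thesis by linarith
  next
    case False
    hence "h/2 \<le> \<bar>h - \<mu>\<bar>" by linarith
    hence "(h/2) powr r \<le> \<alpha>" unfolding \<alpha>_def by (intro powr_mono2) (use r h in auto)
    moreover have "0 \<le> \<beta>" unfolding \<beta>_def by simp
    ultimately show ?thesis by linarith
  qed
  ultimately have I: "m * (h/2) powr r \<le> set_lebesgue_integral lborel {a..c} g"
    using m0 by (metis distrib_right mult.commute mult_left_mono order_trans)
  have "(h/2) * (m/(c-a)) powr (1/r) = ((h/2) powr r * (m/(c-a))) powr (1/r)"
  proof -
    have "((h/2) powr r) powr (1/r) = h/2" using r h by (simp add: powr_powr)
    thus ?thesis by (simp only: powr_mult)
  qed
  also have "\<dots> \<le> (set_lebesgue_integral lborel {a..c} g / (c-a)) powr (1/r)"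
  proof (rule powr_mono2)
    show "0 \<le> (h/2) powr r * (m/(c-a))" using m0 ac by simp
    show "(h/2) powr r * (m/(c-a)) \<le> set_lebesgue_integral lborel {a..c} g / (c-a)"
    proof -
      have "(h/2) powr r * (m/(c-a)) = (m * (h/2) powr r)/(c-a)" by simp
      also have "\<dots> \<le> set_lebesgue_integral lborel {a..c} g / (c-a)"
        by (rule divide_right_mono[OF I]) (use ac in simp)
      finally show ?thesis .
    qed
  qed (use r in simp)
  also have "\<dots> = osc r b a c" unfolding osc_def g_def \<mu>_def ..
  finally show ?thesis .
qed

lemma bound_on_interval:
  assumes "x \<in> {-(real n + 1)..real n + 1}"
  shows "\<bar>phi0 x\<bar> \<le> exp ((real n + 1)^2/2)" "\<bar>psi0 x\<bar> \<le> exp ((real n + 1)^2/2)"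
proof -
  have "\<bar>x\<bar> \<le> real n + 1" using assms by auto
  hence "\<bar>x\<bar>^2 \<le> (real n + 1)^2" by (intro power_mono) auto
  hence "exp (x^2/2) \<le> exp ((real n + 1)^2/2)" by simp
  thus "\<bar>phi0 x\<bar> \<le> exp ((real n + 1)^2/2)" "\<bar>psi0 x\<bar> \<le> exp ((real n + 1)^2/2)"
    using phi0_bound[of x] psi0_bound[of x] by linarith+
qed

lemma osc_phi:
  assumes n: "1 \<le> n" and r: "0 < r"
  shows "(hh n/2) * (mm n/(2*real n+2)) powr (1/r) \<le> osc r phi0 (-(real n+1)) (real n+1)"
proof -
  have e: "2*real n+2 = (real n+1) - (-(real n+1))" by simp
  show ?thesis unfolding e
  proof (rule osc_lower[where S="{real n<..<real n + mm n}" and Z="{-(real n+1)<..<-(real n+1) + mm n}"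
        and B="exp ((real n + 1)^2/2)"])
    show "\<And>x. x \<in> {-(real n+1)..real n+1} \<Longrightarrow> \<bar>phi0 x\<bar> \<le> exp ((real n + 1)^2/2)"
      by (rule bound_on_interval(1))
    show "{real n<..<real n + mm n} \<subseteq> {-(real n+1)..real n+1}" using mm_le1[of n] by auto
    show "{-(real n+1)<..<-(real n+1) + mm n} \<subseteq> {-(real n+1)..real n+1}" using mm_le1[of n] by auto
    show "measure lborel {real n<..<real n + mm n} = mm n" using mm_le1[of n] by simp
    show "measure lborel {-(real n+1)<..<-(real n+1) + mm n} = mm n" using mm_le1[of n] by simp
    show "{real n<..<real n + mm n} \<inter> {-(real n+1)<..<-(real n+1) + mm n} = {}" using mm_le1[of n] by auto
    show "\<And>x. x \<in> {real n<..<real n + mm n} \<Longrightarrow> phi0 x = hh n" using phi0_spike[OF n] by auto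
    show "\<And>x. x \<in> {-(real n+1)<..<-(real n+1) + mm n} \<Longrightarrow> phi0 x = 0"
    proof -
      fix x assume "x \<in> {-(real n+1)<..<-(real n+1) + mm n}"
      hence "x < 1" using mm_le1[of n] by auto
      thus "phi0 x = 0" using phi0_supp[of x] by linarith
    qed
  qed (use r hh_pos[of n] mm_le1[of n] in auto)
qed

lemma osc_psi:
  assumes n: "1 \<le> n" and r: "0 < r"
  shows "(hh n/2) * (mm n/(2*real n+2)) powr (1/r) \<le> osc r psi0 (-(real n+1)) (real n+1)"
proof -
  have e: "2*real n+2 = (real n+1) - (-(real n+1))" by simp
  show ?thesis unfolding e
  proof (rule osc_lower[where S="{-real n - mm n<..<-real n}" and Z="{real n + 1 - mm n<..<real n+1}"
        and B="exp ((real n + 1)^2/2)"])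
    show "\<And>x. x \<in> {-(real n+1)..real n+1} \<Longrightarrow> \<bar>psi0 x\<bar> \<le> exp ((real n + 1)^2/2)"
      by (rule bound_on_interval(2))
    show "{-real n - mm n<..<-real n} \<subseteq> {-(real n+1)..real n+1}" using mm_le1[of n] by auto
    show "{real n + 1 - mm n<..<real n+1} \<subseteq> {-(real n+1)..real n+1}" using mm_le1[of n] by auto
    show "measure lborel {-real n - mm n<..<-real n} = mm n" using mm_le1[of n] by simp
    show "measure lborel {real n + 1 - mm n<..<real n+1} = mm n" using mm_le1[of n] by simp
    show "{-real n - mm n<..<-real n} \<inter> {real n + 1 - mm n<..<real n+1} = {}" using mm_le1[of n] by auto
    show "\<And>x. x \<in> {-real n - mm n<..<-real n} \<Longrightarrow> psi0 x = hh n"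
      unfolding psi0_def using phi0_spike[OF n] by auto
    show "\<And>x. x \<in> {real n + 1 - mm n<..<real n+1} \<Longrightarrow> psi0 x = 0"
    proof -
      fix x assume "x \<in> {real n + 1 - mm n<..<real n+1}"
      hence "x > -1" using mm_le1[of n] by auto
      thus "psi0 x = 0" using psi0_supp[of x] by linarith
    qed
  qed (use r hh_pos[of n] mm_le1[of n] in auto)
qed

lemma Y_big:
  assumes r: "2 < r" and n: "1 \<le> n"
    and big: "(1/2 - 1/r) * real n \<ge> 8 * M + 9" and M: "0 \<le> M"
  shows "M + 1 \<le> (hh n/2) * (mm n/(2*real n+2)) powr (1/r)"
proof -
  define L where "L = 2*real n + 2"
  define d where "d = 1/2 - 1/r"
  have L1: "1 \<le> L" unfolding L_def by simp
  have r0: "0 < r" using r by simp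
  have ir: "1/r \<le> 1" using r by simp
  have "(mm n / L) powr (1/r) = mm n powr (1/r) / L powr (1/r)"
    using mm_le1(2)[of n] L1 by (simp add: powr_divide)
  also have "mm n powr (1/r) = exp (- (real n^2) / r)"
    unfolding mm_def powr_def by simp
  finally have eq: "(mm n / L) powr (1/r) = exp (- (real n^2) / r) / L powr (1/r)" .
  have "L powr (1/r) \<le> L powr 1" using L1 ir by (intro powr_mono) auto
  hence Lp: "L powr (1/r) \<le> L" "0 < L powr (1/r)" using L1 by auto
  have "hh n * exp (- (real n^2) / r) = exp (d * real n^2 - real n)"
    unfolding hh_def d_def by (simp add: exp_add[symmetric] field_simps)
  have "(hh n/2) * (mm n/L) powr (1/r) = (hh n * exp (- (real n^2) / r)) / (2 * L powr (1/r))"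
    unfolding eq by simp
  also have "\<dots> = exp (d * real n^2 - real n) / (2 * L powr (1/r))"
    using \<open>hh n * exp (- (real n^2) / r) = exp (d * real n^2 - real n)\<close> by simp
  also have "\<dots> \<ge> exp (d * real n^2 - real n) / (2 * L)"
    using Lp L1 by (intro divide_left_mono mult_left_mono) (auto intro!: mult_pos_pos)
  finally have Y: "exp (d * real n^2 - real n) / (2 * L) \<le> (hh n/2) * (mm n/L) powr (1/r)" .
  have "d * real n^2 = (d * real n) * real n" by (simp add: power2_eq_square)
  also have "\<dots> \<ge> (8 * M + 9) * real n" using big n unfolding d_def by (intro mult_right_mono) auto
  finally have dn: "(8 * M + 9) * real n \<le> d * real n^2" .
  have "(M + 1) * (2 * L) = (M+1) * (4 * real n + 4)" unfolding L_def by simp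
  also have "\<dots> \<le> (M+1) * (8 * real n)" using n M by (intro mult_left_mono) auto
  also have "\<dots> \<le> 1 + (d * real n^2 - real n)" using dn M n by (simp add: algebra_simps)
  also have "\<dots> \<le> exp (d * real n^2 - real n)" by (rule exp_ge_add_one_self)
  finally have "M + 1 \<le> exp (d * real n^2 - real n) / (2 * L)" using L1 by (simp add: field_simps)
  hence "M + 1 \<le> (hh n/2) * (mm n/L) powr (1/r)" using Y by linarith
  thus ?thesis unfolding L_def .
qed

lemma Sr_inf:
  assumes r: "2 < r"
  shows "S_r r psi0 phi0 = \<infinity>"
  unfolding S_r_def
proof (rule SUP_PInfty)
  fix N :: nat
  define d where "d = 1/2 - 1/r"
  have d: "0 < d" unfolding d_def using r by (simp add: field_simps)
  define n where "n = nat \<lceil>(8 * real N + 9) / d\<rceil> + 1"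
  have n1: "1 \<le> n" unfolding n_def by simp
  have "(8 * real N + 9) / d \<le> real n" unfolding n_def by linarith
  hence big: "d * real n \<ge> 8 * real N + 9" using d by (simp add: field_simps)
  define Y where "Y = (hh n/2) * (mm n/(2*real n+2)) powr (1/r)"
  have Y: "real N + 1 \<le> Y" unfolding Y_def by (rule Y_big[OF r n1]) (use big d_def in auto)
  have o1: "Y \<le> osc r psi0 (-(real n+1)) (real n+1)" unfolding Y_def by (rule osc_psi[OF n1]) (use r in simp)
  have o2: "Y \<le> osc r phi0 (-(real n+1)) (real n+1)" unfolding Y_def by (rule osc_phi[OF n1]) (use r in simp)
  have "Y * 1 \<le> Y * Y" by (rule mult_left_mono) (use Y in auto)
  hence "real N \<le> Y * Y" using Y by linarith
  also have "\<dots> \<le> osc r psi0 (-(real n+1)) (real n+1) * osc r phi0 (-(real n+1)) (real n+1)"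
    using o1 o2 Y by (intro mult_mono) auto
  finally have "ereal (real N) \<le> ereal (osc r psi0 (fst (-(real n+1), real n+1)) (snd (-(real n+1), real n+1)) * osc r phi0 (fst (-(real n+1), real n+1)) (snd (-(real n+1), real n+1)))"
    by simp
  moreover have "(-(real n+1), real n+1) \<in> {(a, c). a < c}" by simp
  ultimately show "\<exists>i\<in>{(a, c). a < c}. ereal (real N) \<le> ereal (osc r psi0 (fst i) (snd i) * osc r phi0 (fst i) (snd i))"
    by blast
qed

theorem theorem4p3:
  shows "\<exists>\<psi> \<phi>. Linf_loc \<psi> \<and> Linf_loc \<phi> \<and>
    (\<forall>\<epsilon>>0. S_r (2 + \<epsilon>) \<psi> \<phi> = \<infinity>) \<and>
    (\<exists>K. \<forall>f. Linf_c f \<longrightarrow>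
       (\<integral>\<^sup>+ x. ennreal ((commut \<phi> (commut \<psi> hilbert) f x)\<^sup>2) \<partial>lborel)
         \<le> ennreal (K\<^sup>2) * (\<integral>\<^sup>+ x. ennreal ((f x)\<^sup>2) \<partial>lborel))"
proof (rule exI[of _ psi0], rule exI[of _ phi0], intro conjI)
  show "Linf_loc psi0" by (rule Linf_psi0)
  show "Linf_loc phi0" by (rule Linf_phi0)
  show "\<forall>\<epsilon>>0. S_r (2 + \<epsilon>) psi0 phi0 = \<infinity>" by (auto intro!: Sr_inf)
next
  show "\<exists>K. \<forall>f. Linf_c f \<longrightarrow>
       (\<integral>\<^sup>+ x. ennreal ((commut phi0 (commut psi0 hilbert) f x)\<^sup>2) \<partial>lborel)
         \<le> ennreal (K\<^sup>2) * (\<integral>\<^sup>+ x. ennreal ((f x)\<^sup>2) \<partial>lborel)"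
    by (rule comm_bound)
qed

end
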